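(* For a positive integer $q$ and an integer $n$ define $$\bar{C}_{q}(n) = \frac{1}{|SL_2(\mathbb{Z}/q\mathbb{Z})|}\sum_{w\in SL_2(\mathbb{Z}/q\mathbb{Z})} c_{q}\big(d(w)-n\big),$$ where for $w=\begin{pmatrix} a & b\\ c & d\end{pmatrix}$ we write $d(w)=d$, and $c_q(m)=\sum_{a \bmod q,\ \gcd(a,q)=1} e^{2\pi i a m/q}$ is the Ramanujan sum. Then for every positive integer $n$ the series $\mathfrak{G}(n)=\sum_{q=1}^{\infty}\bar{C}_q(n)$ converges (absolutely) and $$\mathfrak{G}(n)=\prod_{p}\Big(1+\sum_{k=1}^{\infty}\bar{C}_{p^k}(n)\Big)=\zeta(2)\prod_{p\mid n}\frac{p-1}{p},$$ where the first product is over all primes and the last product is over the distinct primes dividing $n$.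
   Context: $\zeta$ is the Riemann zeta function, $\zeta(2)=\pi^2/6$. The Ramanujan sum $c_q(m)$ depends only on $m$ modulo $q$, so $c_q(d(w)-n)$ is well defined for $d(w)\in\mathbb{Z}/q\mathbb{Z}$. *)

theory Defs
  imports "HOL-Analysis.Analysis" "HOL-Number_Theory.Number_Theory"
begin

text \<open>SL_2(Z/qZ), with matrices (a,b,c,d) = [[a,b],[c,d]] and entries represented
  by their residues in {0..q-1}.\<close>
definition SL2 :: "nat \<Rightarrow> (int \<times> int \<times> int \<times> int) set" where
  "SL2 q = {(a, b, c, d). a \<in> {0..<int q} \<and> b \<in> {0..<int q} \<and> c \<in> {0..<int q}
              \<and> d \<in> {0..<int q} \<and> [a * d - b * c = 1] (mod int q)}"

definition d_entry :: "int \<times> int \<times> int \<times> int \<Rightarrow> int" where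
  "d_entry w = snd (snd (snd w))"

definition ramanujan_sum :: "nat \<Rightarrow> int \<Rightarrow> complex" where
  "ramanujan_sum q m = (\<Sum>a \<in> {a. a \<in> {1..q} \<and> coprime a q}.
        exp (2 * of_real pi * \<i> * of_nat a * of_int m / of_nat q))"

definition Cbar :: "nat \<Rightarrow> int \<Rightarrow> complex" where
  "Cbar q n = (1 / of_nat (card (SL2 q))) * (\<Sum>w \<in> SL2 q. ramanujan_sum q (d_entry w - n))"

end

theory Submission
  imports Defs
begin

definition ee :: "nat \<Rightarrow> int \<Rightarrow> complex" where
  "ee q x = exp (2 * of_real pi * \<i> * of_int x / of_nat q)"

lemma ee_add: "ee q (x + y) = ee q x * ee q y"
  unfolding ee_def by (simp add: distrib_left add_divide_distrib exp_add)

lemma ee_zero[simp]: "ee q 0 = 1"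
  unfolding ee_def by simp

lemma ee_minus: "ee q (- x) = inverse (ee q x)"
  unfolding ee_def by (simp add: exp_minus)

lemma ee_mult_q: assumes "q > 0" shows "ee q (int q * k) = 1"
proof -
  have "2 * complex_of_real pi * \<i> * of_int (int q * k) / of_nat q = \<i> * (of_int k * (of_real pi * 2))"
    using assms by (simp add: field_simps)
  then show ?thesis unfolding ee_def by (simp add: exp_2pi_1_int)
qed

lemma ee_period: assumes "q > 0" shows "ee q (x + int q * k) = ee q x"
  using ee_add[of q x "int q * k"] ee_mult_q[OF assms] by simp

lemma ee_mod: assumes "q > 0" shows "ee q (x mod int q) = ee q x"
proof -
  have "x = x mod int q + int q * (x div int q)" by simp
  then have "ee q x = ee q (x mod int q + int q * (x div int q))" by metis
  also have "\<dots> = ee q (x mod int q)" by (rule ee_period[OF assms])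
  finally show ?thesis by simp
qed

lemma ee_cong: assumes "q > 0" "[x = y] (mod int q)" shows "ee q x = ee q y"
  using ee_mod[OF assms(1), of x] ee_mod[OF assms(1), of y] assms(2) unfolding cong_def by simp

lemma ee_eq_1_iff: assumes "q > 0" shows "ee q x = 1 \<longleftrightarrow> int q dvd x"
proof
  assume "int q dvd x" then obtain k where "x = int q * k" by auto
  then show "ee q x = 1" using ee_mult_q[OF assms] by simp
next
  assume h: "ee q x = 1"
  have "ee q (x mod int q) = 1" using h ee_mod[OF assms] by simp
  moreover have "x mod int q = int (nat (x mod int q))" using assms by simp
  ultimately have "exp (2 * complex_of_real pi * \<i> * complex_of_nat (nat (x mod int q)) / complex_of_nat q) = 1"
    unfolding ee_def by (metis of_int_of_nat_eq)
  moreover have "(exp (2 * complex_of_real pi * \<i> * complex_of_nat (nat (x mod int q)) / complex_of_nat q) = 1) = (q dvd nat (x mod int q))"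
    by (rule complex_root_unity_eq_1) (use assms in simp)
  ultimately have "q dvd nat (x mod int q)" by blast
  moreover have "nat (x mod int q) < q" using assms by (simp add: nat_less_iff)
  ultimately have "nat (x mod int q) = 0" using dvd_imp_le by (metis gr0I leD)
  then have "x mod int q = 0" using assms by (metis \<open>x mod int q = int (nat (x mod int q))\<close> of_nat_0)
  then show "int q dvd x" by auto
qed

lemma ee_mult_nat: "ee q (int k * x) = ee q x ^ k"
proof -
  have "ee q x ^ k = exp (of_nat k * (2 * complex_of_real pi * \<i> * of_int x / of_nat q))"
    unfolding ee_def by (rule exp_of_nat_mult[symmetric])
  also have "\<dots> = ee q (int k * x)" unfolding ee_def by (simp add: algebra_simps)
  finally show ?thesis by simp
qed

lemma ee_orth: assumes "q > 0"
  shows "(\<Sum>t\<in>{0..<int q}. ee q (t * x)) = (if int q dvd x then of_nat q else 0)"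
proof -
  have "(\<Sum>t\<in>{0..<int q}. ee q (t * x)) = (\<Sum>k\<in>{0..<q}. ee q (int k * x))"
  proof -
    have "(\<Sum>t\<in>{0..<int q}. ee q (t * x)) = (\<Sum>t\<in>int ` {0..<q}. ee q (t * x))"
      by (simp add: image_int_atLeastLessThan)
    also have "\<dots> = (\<Sum>k\<in>{0..<q}. ee q (int k * x))" by (simp add: sum.reindex)
    finally show ?thesis .
  qed
  also have "\<dots> = (\<Sum>k<q. ee q x ^ k)" by (simp add: ee_mult_nat atLeast0LessThan)
  finally have eq: "(\<Sum>t\<in>{0..<int q}. ee q (t * x)) = (\<Sum>k<q. ee q x ^ k)" .
  show ?thesis
  proof (cases "int q dvd x")
    case True
    then have "ee q x = 1" using ee_eq_1_iff[OF assms] by simp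
    then show ?thesis using eq True by simp
  next
    case False
    then have ne: "ee q x \<noteq> 1" using ee_eq_1_iff[OF assms] by simp
    have "ee q x ^ q = 1" using ee_mult_nat[of q q x] ee_mult_q[OF assms] by simp
    then show ?thesis using eq False geometric_sum[OF ne, of q] by simp
  qed
qed

lemma ee_scale: assumes "k > 0" shows "ee (k * q) (x * int k) = ee q x"
  unfolding ee_def using assms by (simp add: field_simps)


lemma swap3: "(\<Sum>b\<in>B. \<Sum>c\<in>C. \<Sum>d\<in>D. f b c d) = (\<Sum>d\<in>D. \<Sum>b\<in>B. \<Sum>c\<in>C. f b c d)"
proof -
  have "(\<Sum>b\<in>B. \<Sum>c\<in>C. \<Sum>d\<in>D. f b c d) = (\<Sum>b\<in>B. \<Sum>d\<in>D. \<Sum>c\<in>C. f b c d)"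
    by (rule sum.cong[OF refl], rule sum.swap)
  also have "\<dots> = (\<Sum>d\<in>D. \<Sum>b\<in>B. \<Sum>c\<in>C. f b c d)" by (rule sum.swap)
  finally show ?thesis .
qed

lemma indicator_cong1:
  assumes "q > 0"
  shows "(if [x = 1] (mod int q) then (1::complex) else 0) = (1 / of_nat q) * (\<Sum>t\<in>{0..<int q}. ee q (t * (x - 1)))"
  using assms by (simp add: ee_orth cong_iff_dvd_diff dvd_diff_commute)

lemma SL2_eq: "SL2 q = {w \<in> {0..<int q} \<times> {0..<int q} \<times> {0..<int q} \<times> {0..<int q}.
   (case w of (a,b,c,d) \<Rightarrow> [a * d - b * c = 1] (mod int q))}"
  unfolding SL2_def by auto

lemma SL2_sum:
  fixes G :: "int \<Rightarrow> complex"
  assumes q: "q > 0"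
  defines "R \<equiv> {0..<int q}"
  shows "(\<Sum>w\<in>SL2 q. G (d_entry w)) = (1 / of_nat q) *
     (\<Sum>t\<in>R. ee q (-t) * (\<Sum>a\<in>R. \<Sum>d\<in>R. ee q (t*a*d) * G d) * (\<Sum>b\<in>R. \<Sum>c\<in>R. ee q (-(t*b*c))))"
proof -
  have fin: "finite R" unfolding R_def by simp
  have "(\<Sum>w\<in>SL2 q. G (d_entry w)) = (\<Sum>w\<in>R \<times> R \<times> R \<times> R. if (case w of (a,b,c,d) \<Rightarrow> [a * d - b * c = 1] (mod int q)) then G (d_entry w) else 0)"
    unfolding SL2_eq R_def by (rule sum.inter_filter) simp
  also have "\<dots> = (\<Sum>a\<in>R. \<Sum>b\<in>R. \<Sum>c\<in>R. \<Sum>d\<in>R. if [a * d - b * c = 1] (mod int q) then G d else 0)"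
    unfolding d_entry_def by (simp add: sum.cartesian_product split_def)
  also have "\<dots> = (\<Sum>a\<in>R. \<Sum>b\<in>R. \<Sum>c\<in>R. \<Sum>d\<in>R. (1 / of_nat q) * (\<Sum>t\<in>R. ee q (t * (a * d - b * c - 1))) * G d)"
  proof -
    have ind: "(1 / of_nat q) * (\<Sum>t\<in>R. ee q (t * (x - 1))) = (if [x = 1] (mod int q) then (1::complex) else 0)" for x
      unfolding R_def by (rule indicator_cong1[OF q, symmetric])
    show ?thesis by (simp only: ind) (intro sum.cong refl, simp)
  qed
  also have "\<dots> = (1 / of_nat q) * (\<Sum>a\<in>R. \<Sum>b\<in>R. \<Sum>c\<in>R. \<Sum>d\<in>R. \<Sum>t\<in>R. ee q (-t) * (ee q (t*a*d) * G d) * ee q (-(t*b*c)))"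
  proof -
    have e: "ee q (t * (a * d - b * c - 1)) = ee q (-t) * ee q (t*a*d) * ee q (-(t*b*c))" for t a b c d
    proof -
      have "t * (a * d - b * c - 1) = -t + t*a*d + (-(t*b*c))" by (simp add: algebra_simps)
      then have "ee q (t * (a * d - b * c - 1)) = ee q (-t + t*a*d + (-(t*b*c)))" by metis
      then show ?thesis by (simp only: ee_add)
    qed
    show ?thesis by (simp add: e sum_distrib_left sum_distrib_right mult_ac)
  qed
  also have "\<dots> = (1 / of_nat q) * (\<Sum>t\<in>R. \<Sum>a\<in>R. \<Sum>d\<in>R. \<Sum>b\<in>R. \<Sum>c\<in>R. ee q (-t) * (ee q (t*a*d) * G d) * ee q (-(t*b*c)))"
  proof -
    have "(\<Sum>a\<in>R. \<Sum>b\<in>R. \<Sum>c\<in>R. \<Sum>d\<in>R. \<Sum>t\<in>R. ee q (-t) * (ee q (t*a*d) * G d) * ee q (-(t*b*c)))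
      = (\<Sum>a\<in>R. \<Sum>b\<in>R. \<Sum>c\<in>R. \<Sum>t\<in>R. \<Sum>d\<in>R. ee q (-t) * (ee q (t*a*d) * G d) * ee q (-(t*b*c)))"
      by (intro sum.cong refl sum.swap)
    also have "\<dots> = (\<Sum>a\<in>R. \<Sum>t\<in>R. \<Sum>b\<in>R. \<Sum>c\<in>R. \<Sum>d\<in>R. ee q (-t) * (ee q (t*a*d) * G d) * ee q (-(t*b*c)))"
      by (intro sum.cong refl swap3)
    also have "\<dots> = (\<Sum>t\<in>R. \<Sum>a\<in>R. \<Sum>b\<in>R. \<Sum>c\<in>R. \<Sum>d\<in>R. ee q (-t) * (ee q (t*a*d) * G d) * ee q (-(t*b*c)))"
      by (rule sum.swap)
    also have "\<dots> = (\<Sum>t\<in>R. \<Sum>a\<in>R. \<Sum>d\<in>R. \<Sum>b\<in>R. \<Sum>c\<in>R. ee q (-t) * (ee q (t*a*d) * G d) * ee q (-(t*b*c)))"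
      by (intro sum.cong refl swap3)
    finally show ?thesis by simp
  qed
  also have "\<dots> = (1 / of_nat q) *
     (\<Sum>t\<in>R. ee q (-t) * (\<Sum>a\<in>R. \<Sum>d\<in>R. ee q (t*a*d) * G d) * (\<Sum>b\<in>R. \<Sum>c\<in>R. ee q (-(t*b*c))))"
    by (simp add: sum_distrib_left sum_distrib_right mult_ac)
  finally show ?thesis .
qed


lemma sum_if_const: "finite A \<Longrightarrow> (\<Sum>x\<in>A. if P x then (c::complex) else 0) = c * of_nat (card {x\<in>A. P x})"
  by (simp add: sum.If_cases Int_def)

lemma card_dvd_gcd:
  assumes q: "q > 0"
  shows "card {b\<in>{0..<int q}. int q dvd t * b} = nat (gcd t (int q))"
proof -
  define g where "g = gcd t (int q)"
  define q' where "q' = int q div g"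
  define t' where "t' = t div g"
  have gpos: "g > 0" unfolding g_def using q by simp
  have qg: "int q = g * q'" unfolding q'_def g_def by simp
  have tg: "t = g * t'" unfolding t'_def g_def by simp
  have "0 < g * q'" using qg q by simp
  then have q'pos: "q' > 0" using gpos by (simp add: zero_less_mult_iff)
  have cop: "coprime t' q'" unfolding t'_def q'_def g_def using q by (intro div_gcd_coprime) simp
  have iff: "int q dvd t * b \<longleftrightarrow> q' dvd b" for b
  proof -
    have "int q dvd t * b \<longleftrightarrow> g * q' dvd g * (t' * b)" using qg tg by (simp add: mult.assoc)
    also have "\<dots> \<longleftrightarrow> q' dvd t' * b" using gpos by simp
    also have "\<dots> \<longleftrightarrow> q' dvd b" using cop by (simp add: coprime_commute coprime_dvd_mult_right_iff)
    finally show ?thesis .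
  qed
  have "{b\<in>{0..<int q}. int q dvd t * b} = (\<lambda>j. q' * j) ` {0..<g}"
  proof (rule equalityI; rule subsetI)
    fix b assume "b \<in> {b\<in>{0..<int q}. int q dvd t * b}"
    then have b: "0 \<le> b" "b < int q" "q' dvd b" using iff by auto
    then obtain j where j: "b = q' * j" by auto
    have "0 \<le> j" using b(1) j q'pos by (simp add: zero_le_mult_iff)
    moreover have "j < g" using b(2) j qg q'pos by (simp add: mult.commute)
    ultimately show "b \<in> (\<lambda>j. q' * j) ` {0..<g}" using j by auto
  next
    fix b assume "b \<in> (\<lambda>j. q' * j) ` {0..<g}"
    then obtain j where j0: "j \<in> {0..<g}" and j1: "b = q' * j" by (rule imageE)
    from j0 j1 have j: "b = q' * j" "0 \<le> j" "j < g" by auto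
    have "0 \<le> b" using j q'pos by simp
    moreover have "b < int q" using j q'pos qg by (simp add: mult.commute)
    moreover have "q' dvd b" using j by simp
    ultimately show "b \<in> {b\<in>{0..<int q}. int q dvd t * b}" using iff by auto
  qed
  moreover have "inj_on (\<lambda>j. q' * j) {0..<g}" using q'pos by (auto simp: inj_on_def)
  ultimately show ?thesis by (simp add: card_image g_def)
qed

lemma card_sol_coprime:
  assumes q: "q > 0" and cop: "coprime t (int q)"
  shows "card {a\<in>{0..<int q}. int q dvd t * a + u} = 1"
proof -
  obtain x where x: "[t * x = 1] (mod int q)" using cong_solve_coprime_int[OF cop] by auto
  define a0 where "a0 = (- u * x) mod int q"
  have "{a\<in>{0..<int q}. int q dvd t * a + u} = {a0}"
  proof (rule equalityI; rule subsetI)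
    fix a assume "a \<in> {a\<in>{0..<int q}. int q dvd t * a + u}"
    then have a: "0 \<le> a" "a < int q" "int q dvd t * a + u" by auto
    have "[t * a + u = 0] (mod int q)" using a(3) by (simp add: cong_0_iff)
    then have "[x * (t * a + u) = x * 0] (mod int q)" by (rule cong_scalar_left)
    then have "[(t * x) * a + x * u = 0] (mod int q)" by (simp add: algebra_simps)
    moreover have "[(t * x) * a + x * u = 1 * a + x * u] (mod int q)"
      using x by (intro cong_add cong_mult cong_refl)
    ultimately have "[a + x * u = 0] (mod int q)" by (metis cong_sym cong_trans mult_1)
    then have "[a = - u * x] (mod int q)" by (metis add.commute cong_add_lcancel_0 cong_diff_iff_cong_0 diff_minus_eq_add minus_mult_left mult.commute)
    then have "a mod int q = (- u * x) mod int q" by (simp add: cong_def)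
    then show "a \<in> {a0}" using a unfolding a0_def by simp
  next
    fix a assume "a \<in> {a0}"
    then have a: "a = a0" by simp
    have "0 \<le> a" "a < int q" using q a unfolding a0_def by auto
    moreover have "[a = - u * x] (mod int q)" using a unfolding a0_def by (simp add: cong_def)
    then have "[t * a + u = t * (- u * x) + u] (mod int q)" by (intro cong_add cong_mult cong_refl)
    moreover have "[t * (- u * x) + u = - u * (t * x) + u] (mod int q)" by (simp add: algebra_simps)
    moreover have "[- u * (t * x) + u = - u * 1 + u] (mod int q)" using x by (intro cong_add cong_mult cong_refl)
    ultimately have "[t * a + u = 0] (mod int q)" by (metis (no_types, lifting) cong_trans add.commute add.right_inverse mult_minus1_right mult_minus_left mult_1_right)
    then show "a \<in> {a\<in>{0..<int q}. int q dvd t * a + u}" using \<open>0 \<le> a\<close> \<open>a < int q\<close> by (simp add: cong_0_iff)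
  qed
  then show ?thesis by simp
qed

lemma card_sol_noncoprime:
  assumes q: "q > 0" and ncop: "\<not> coprime t (int q)" and cop: "coprime u (int q)"
  shows "card {a\<in>{0..<int q}. int q dvd t * a + u} = 0"
proof -
  have "{a\<in>{0..<int q}. int q dvd t * a + u} = {}"
  proof (rule ccontr)
    assume "{a\<in>{0..<int q}. int q dvd t * a + u} \<noteq> {}"
    then obtain a where a: "int q dvd t * a + u" by auto
    define g where "g = gcd t (int q)"
    have "g dvd t * a + u" using a unfolding g_def by (meson dvd_trans gcd_dvd2)
    moreover have "g dvd t * a" unfolding g_def by simp
    ultimately have "g dvd u" by (metis dvd_add_right_iff)
    moreover have "g dvd int q" unfolding g_def by simp
    ultimately have "is_unit g" using cop by (meson coprime_common_divisor)
    then have "coprime t (int q)" unfolding g_def by (simp add: coprime_iff_gcd_eq_1)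
    then show False using ncop by simp
  qed
  then show ?thesis by (metis card.empty)
qed


definition UU :: "nat \<Rightarrow> int set" where "UU q = {u\<in>{0..<int q}. coprime u (int q)}"
definition cs :: "nat \<Rightarrow> int \<Rightarrow> complex" where "cs q m = (\<Sum>u\<in>UU q. ee q (u * m))"
definition Hq :: "nat \<Rightarrow> complex" where
  "Hq q = (\<Sum>t\<in>{0..<int q}. ee q (-t) * (of_int (gcd t (int q)))^2)"

lemma inner_dvd_sum:
  assumes q: "q > 0"
  shows "(\<Sum>d\<in>{0..<int q}. ee q (d * x)) = (if int q dvd x then of_nat q else 0)"
  by (rule ee_orth[OF q])

lemma B_eval:
  assumes q: "q > 0"
  shows "(\<Sum>b\<in>{0..<int q}. \<Sum>c\<in>{0..<int q}. ee q (-(t*b*c))) = of_nat q * of_int (gcd t (int q))"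
proof -
  have "(\<Sum>b\<in>{0..<int q}. \<Sum>c\<in>{0..<int q}. ee q (-(t*b*c))) = (\<Sum>b\<in>{0..<int q}. \<Sum>c\<in>{0..<int q}. ee q (c * (-(t*b))))"
    by (intro sum.cong refl arg_cong[where f="ee q"]) (simp add: algebra_simps)
  also have "\<dots> = (\<Sum>b\<in>{0..<int q}. if int q dvd t * b then of_nat q else 0)"
    by (intro sum.cong refl) (subst ee_orth[OF q], simp)
  also have "\<dots> = of_nat q * of_nat (card {b\<in>{0..<int q}. int q dvd t * b})"
    by (rule sum_if_const) simp
  also have "\<dots> = of_nat q * of_int (gcd t (int q))"
    using card_dvd_gcd[OF q, of t] by simp
  finally show ?thesis .
qed

lemma A1_eval:
  assumes q: "q > 0"
  shows "(\<Sum>a\<in>{0..<int q}. \<Sum>d\<in>{0..<int q}. ee q (t*a*d) * 1) = of_nat q * of_int (gcd t (int q))"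
proof -
  have "(\<Sum>a\<in>{0..<int q}. \<Sum>d\<in>{0..<int q}. ee q (t*a*d) * 1) = (\<Sum>a\<in>{0..<int q}. \<Sum>d\<in>{0..<int q}. ee q (d * (t*a)))"
    by (intro sum.cong refl arg_cong[where f="ee q"]) (simp add: algebra_simps)
  also have "\<dots> = (\<Sum>a\<in>{0..<int q}. if int q dvd t * a then of_nat q else 0)"
    by (intro sum.cong refl) (subst ee_orth[OF q], simp)
  also have "\<dots> = of_nat q * of_nat (card {b\<in>{0..<int q}. int q dvd t * b})"
    by (rule sum_if_const) simp
  also have "\<dots> = of_nat q * of_int (gcd t (int q))"
    using card_dvd_gcd[OF q, of t] by simp
  finally show ?thesis .
qed

lemma card_SL2:
  assumes q: "q > 0"
  shows "of_nat (card (SL2 q)) = of_nat q * Hq q"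
proof -
  have "of_nat (card (SL2 q)) = (\<Sum>w\<in>SL2 q. (1::complex))" by simp
  also have "\<dots> = (1 / of_nat q) * (\<Sum>t\<in>{0..<int q}. ee q (-t) * (of_nat q * of_int (gcd t (int q))) * (of_nat q * of_int (gcd t (int q))))"
    by (simp only: SL2_sum[OF q, of "\<lambda>_. 1"] A1_eval[OF q] B_eval[OF q])
  also have "\<dots> = of_nat q * Hq q"
    unfolding Hq_def using q by (simp add: sum_distrib_left power2_eq_square mult_ac)
  finally show ?thesis .
qed

lemma A_eval:
  assumes q: "q > 0"
  shows "(\<Sum>a\<in>{0..<int q}. \<Sum>d\<in>{0..<int q}. ee q (t*a*d) * cs q (d - m)) =
     (if coprime t (int q) then of_nat q * cs q (- m) else 0)"
proof -
  have fin: "finite (UU q)" unfolding UU_def by (rule finite_subset[of _ "{0..<int q}"]) auto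
  have "(\<Sum>a\<in>{0..<int q}. \<Sum>d\<in>{0..<int q}. ee q (t*a*d) * cs q (d - m)) =
     (\<Sum>a\<in>{0..<int q}. \<Sum>d\<in>{0..<int q}. \<Sum>u\<in>UU q. ee q (u * (-m)) * ee q (d * (t*a + u)))"
  proof (intro sum.cong refl)
    fix a d
    have "ee q (t*a*d) * cs q (d - m) = (\<Sum>u\<in>UU q. ee q (t*a*d) * ee q (u * (d - m)))"
      unfolding cs_def by (simp add: sum_distrib_left)
    also have "\<dots> = (\<Sum>u\<in>UU q. ee q (u * (-m)) * ee q (d * (t*a + u)))"
    proof (intro sum.cong refl)
      fix u
      have "t*a*d + u * (d - m) = u * (-m) + d * (t*a + u)" by (simp add: algebra_simps)
      then show "ee q (t*a*d) * ee q (u * (d - m)) = ee q (u * (-m)) * ee q (d * (t*a + u))"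
        by (metis ee_add)
    qed
    finally show "ee q (t*a*d) * cs q (d - m) = (\<Sum>u\<in>UU q. ee q (u * (-m)) * ee q (d * (t*a + u)))" .
  qed
  also have "\<dots> = (\<Sum>u\<in>UU q. ee q (u * (-m)) * (\<Sum>a\<in>{0..<int q}. \<Sum>d\<in>{0..<int q}. ee q (d * (t*a + u))))"
  proof -
    have "(\<Sum>a\<in>{0..<int q}. \<Sum>d\<in>{0..<int q}. \<Sum>u\<in>UU q. ee q (u * (-m)) * ee q (d * (t*a + u)))
      = (\<Sum>a\<in>{0..<int q}. \<Sum>u\<in>UU q. \<Sum>d\<in>{0..<int q}. ee q (u * (-m)) * ee q (d * (t*a + u)))"
      by (intro sum.cong refl sum.swap)
    also have "\<dots> = (\<Sum>u\<in>UU q. \<Sum>a\<in>{0..<int q}. \<Sum>d\<in>{0..<int q}. ee q (u * (-m)) * ee q (d * (t*a + u)))"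
      by (rule sum.swap)
    finally show ?thesis by (simp add: sum_distrib_left)
  qed
  also have "\<dots> = (\<Sum>u\<in>UU q. ee q (u * (-m)) * (of_nat q * of_nat (card {a\<in>{0..<int q}. int q dvd t * a + u})))"
  proof (intro sum.cong refl arg_cong2[where f="(*)"])
    fix u
    have "(\<Sum>a\<in>{0..<int q}. \<Sum>d\<in>{0..<int q}. ee q (d * (t*a + u))) = (\<Sum>a\<in>{0..<int q}. if int q dvd t * a + u then of_nat q else 0)"
      by (intro sum.cong refl) (subst ee_orth[OF q], simp)
    also have "\<dots> = of_nat q * of_nat (card {a\<in>{0..<int q}. int q dvd t * a + u})"
      by (rule sum_if_const) simp
    finally show "(\<Sum>a\<in>{0..<int q}. \<Sum>d\<in>{0..<int q}. ee q (d * (t*a + u))) = of_nat q * of_nat (card {a\<in>{0..<int q}. int q dvd t * a + u})" .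
  qed
  also have "\<dots> = (if coprime t (int q) then of_nat q * cs q (- m) else 0)"
  proof (cases "coprime t (int q)")
    case True
    then show ?thesis using card_sol_coprime[OF q True]
      by (simp add: cs_def sum_distrib_left mult_ac)
  next
    case False
    have "card {a\<in>{0..<int q}. int q dvd t * a + u} = 0" if "u \<in> UU q" for u
      using card_sol_noncoprime[OF q False] that unfolding UU_def by simp
    then show ?thesis using False by simp
  qed
  finally show ?thesis .
qed

lemma sum_cs:
  assumes q: "q > 0"
  shows "(\<Sum>w\<in>SL2 q. cs q (d_entry w - m)) = of_nat q * cs q (-1) * cs q (- m)"
proof -
  have "(\<Sum>w\<in>SL2 q. cs q (d_entry w - m)) = (1 / of_nat q) * (\<Sum>t\<in>{0..<int q}. ee q (-t) * (if coprime t (int q) then of_nat q * cs q (- m) else 0) * (of_nat q * of_int (gcd t (int q))))"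
    by (simp only: SL2_sum[OF q, of "\<lambda>d. cs q (d - m)"] A_eval[OF q] B_eval[OF q])
  also have "\<dots> = (1 / of_nat q) * (\<Sum>t\<in>{0..<int q}. if coprime t (int q) then ee q (-t) * (of_nat q * cs q (- m)) * of_nat q else 0)"
    by (intro arg_cong2[where f="(*)"] refl sum.cong) (auto simp: coprime_iff_gcd_eq_1)
  also have "\<dots> = (1 / of_nat q) * (\<Sum>t\<in>UU q. ee q (-t) * (of_nat q * cs q (- m)) * of_nat q)"
    unfolding UU_def by (rule arg_cong[where f="\<lambda>x. (1 / of_nat q) * x"], rule sum.inter_filter[symmetric]) simp
  also have "\<dots> = of_nat q * cs q (-1) * cs q (- m)"
    using q unfolding cs_def by (simp add: sum_distrib_left sum_distrib_right mult_ac mult_minus1_right)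
  finally show ?thesis .
qed


lemma gcd_mult_coprime_int:
  fixes a b c :: int
  assumes cop: "coprime b c"
  shows "gcd a (b * c) = gcd a b * gcd a c"
proof (rule zdvd_antisym_nonneg)
  show "0 \<le> gcd a (b * c)" by simp
  show "0 \<le> gcd a b * gcd a c" by simp
  have c12: "coprime (gcd a b) (gcd a c)"
    using cop by (meson coprime_divisors gcd_dvd2)
  have "gcd a b * gcd a c dvd a" using c12 by (simp add: divides_mult)
  moreover have "gcd a b * gcd a c dvd b * c" by (simp add: mult_dvd_mono)
  ultimately show "gcd a b * gcd a c dvd gcd a (b * c)" by simp
  define g where "g = gcd a (b * c)"
  define h where "h = gcd g b"
  show "gcd a (b * c) dvd gcd a b * gcd a c"
  proof (cases "g = 0")
    case True then show ?thesis unfolding g_def by auto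
  next
    case False
    then have hnz: "h \<noteq> 0" unfolding h_def by simp
    define g' where "g' = g div h"
    define b' where "b' = b div h"
    have g': "g = h * g'" unfolding g'_def h_def by simp
    have b': "b = h * b'" unfolding b'_def h_def by simp
    have "coprime g' b'" unfolding g'_def b'_def h_def using False by (intro div_gcd_coprime) simp
    have "g dvd b * c" unfolding g_def by simp
    then have "h * g' dvd h * (b' * c)" using g' b' by (simp add: mult.assoc)
    then have "g' dvd b' * c" using hnz by simp
    then have "g' dvd c" using \<open>coprime g' b'\<close> by (simp add: coprime_dvd_mult_right_iff)
    moreover have "g' dvd a" using g' unfolding g_def by (metis dvd_mult_right gcd_dvd1)
    ultimately have "g' dvd gcd a c" by simp
    moreover have "h dvd gcd a b" unfolding h_def g_def by (meson dvd_trans gcd_dvd1 gcd_dvd2 gcd_greatest)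
    ultimately have "h * g' dvd gcd a b * gcd a c" by (metis mult_dvd_mono)
    then show ?thesis unfolding g_def[symmetric] using g' by simp
  qed
qed

definition crt :: "nat \<Rightarrow> nat \<Rightarrow> int \<times> int \<Rightarrow> int" where
  "crt q1 q2 = (\<lambda>(t1, t2). (t1 * int q2 + t2 * int q1) mod (int q1 * int q2))"

lemma crt_cong: "[crt q1 q2 (t1, t2) = t1 * int q2 + t2 * int q1] (mod int q1 * int q2)"
  unfolding crt_def cong_def by simp

lemma crt_cong1: "[crt q1 q2 (t1, t2) = t1 * int q2] (mod int q1)"
proof -
  have "[crt q1 q2 (t1, t2) = t1 * int q2 + t2 * int q1] (mod int q1)"
    using crt_cong cong_modulus_mult by blast
  moreover have "[t1 * int q2 + t2 * int q1 = t1 * int q2 + 0] (mod int q1)"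
    by (intro cong_add cong_refl) (simp add: cong_0_iff)
  ultimately show ?thesis using cong_trans by fastforce
qed

lemma crt_cong2: "[crt q1 q2 (t1, t2) = t2 * int q1] (mod int q2)"
proof -
  have "[crt q1 q2 (t1, t2) = t1 * int q2 + t2 * int q1] (mod int q2 * int q1)"
    using crt_cong by (simp add: mult.commute)
  then have "[crt q1 q2 (t1, t2) = t1 * int q2 + t2 * int q1] (mod int q2)"
    using cong_modulus_mult by blast
  moreover have "[t1 * int q2 + t2 * int q1 = 0 + t2 * int q1] (mod int q2)"
    by (intro cong_add cong_refl) (simp add: cong_0_iff)
  ultimately show ?thesis using cong_trans by fastforce
qed

lemma crt_bij:
  assumes q1: "q1 > 0" and q2: "q2 > 0" and cop: "coprime q1 q2"
  shows "bij_betw (crt q1 q2) ({0..<int q1} \<times> {0..<int q2}) {0..<int (q1 * q2)}"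
proof -
  have copi: "coprime (int q2) (int q1)" using cop by (simp add: coprime_commute)
  have copi2: "coprime (int q1) (int q2)" using cop by simp
  have inj: "inj_on (crt q1 q2) ({0..<int q1} \<times> {0..<int q2})"
  proof (rule inj_onI)
    fix x y assume x: "x \<in> {0..<int q1} \<times> {0..<int q2}" and y: "y \<in> {0..<int q1} \<times> {0..<int q2}"
      and eq: "crt q1 q2 x = crt q1 q2 y"
    obtain x1 x2 where xx: "x = (x1, x2)" by fastforce
    obtain y1 y2 where yy: "y = (y1, y2)" by fastforce
    have "[x1 * int q2 = y1 * int q2] (mod int q1)"
      using crt_cong1[of q1 q2 x1 x2] crt_cong1[of q1 q2 y1 y2] eq xx yy by (metis cong_sym cong_trans)
    then have "[x1 = y1] (mod int q1)" using cong_mult_rcancel[OF copi] by simp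
    then have 1: "x1 = y1" using x y xx yy by (simp add: cong_def)
    have "[x2 * int q1 = y2 * int q1] (mod int q2)"
      using crt_cong2[of q1 q2 x1 x2] crt_cong2[of q1 q2 y1 y2] eq xx yy by (metis cong_sym cong_trans)
    then have "[x2 = y2] (mod int q2)" using cong_mult_rcancel[OF copi2] by simp
    then have 2: "x2 = y2" using x y xx yy by (simp add: cong_def)
    show "x = y" using 1 2 xx yy by simp
  qed
  have sub: "crt q1 q2 ` ({0..<int q1} \<times> {0..<int q2}) \<subseteq> {0..<int (q1 * q2)}"
    using q1 q2 by (auto simp: crt_def)
  have "card (crt q1 q2 ` ({0..<int q1} \<times> {0..<int q2})) = card {0..<int (q1 * q2)}"
    using card_image[OF inj] by (simp add: card_cartesian_product flip: of_nat_mult)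
  then have "crt q1 q2 ` ({0..<int q1} \<times> {0..<int q2}) = {0..<int (q1 * q2)}"
    using sub by (intro card_subset_eq) auto
  then show ?thesis using inj by (simp add: bij_betw_def)
qed

lemma crt_ee:
  assumes q1: "q1 > 0" and q2: "q2 > 0"
  shows "ee (q1 * q2) (crt q1 q2 (t1, t2) * m) = ee q1 (t1 * m) * ee q2 (t2 * m)"
proof -
  have "[crt q1 q2 (t1, t2) * m = (t1 * int q2 + t2 * int q1) * m] (mod int (q1 * q2))"
    using crt_cong by (simp add: cong_mult)
  then have "ee (q1 * q2) (crt q1 q2 (t1, t2) * m) = ee (q1 * q2) ((t1 * int q2 + t2 * int q1) * m)"
    using q1 q2 by (intro ee_cong) auto
  also have "\<dots> = ee (q1 * q2) ((t1 * m) * int q2) * ee (q1 * q2) ((t2 * m) * int q1)"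
  proof -
    have "(t1 * int q2 + t2 * int q1) * m = (t1 * m) * int q2 + (t2 * m) * int q1" by (simp add: algebra_simps)
    then show ?thesis by (metis ee_add)
  qed
  also have "\<dots> = ee q1 (t1 * m) * ee q2 (t2 * m)"
  proof -
    have e1: "ee (q1*q2) (x * int q2) = ee q1 x" for x using ee_scale[OF q2, of q1 x] by (simp add: mult.commute)
    have e2: "ee (q1*q2) (x * int q1) = ee q2 x" for x using ee_scale[OF q1, of q2 x] by simp
    show ?thesis by (simp only: e1 e2)
  qed
  finally show ?thesis .
qed

lemma crt_gcd:
  assumes q1: "q1 > 0" and q2: "q2 > 0" and cop: "coprime q1 q2"
  shows "gcd (crt q1 q2 (t1, t2)) (int (q1 * q2)) = gcd t1 (int q1) * gcd t2 (int q2)"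
proof -
  have copi: "coprime (int q1) (int q2)" using cop by simp
  have "gcd (crt q1 q2 (t1, t2)) (int q1 * int q2) = gcd (crt q1 q2 (t1, t2)) (int q1) * gcd (crt q1 q2 (t1, t2)) (int q2)"
    by (rule gcd_mult_coprime_int[OF copi])
  also have "gcd (crt q1 q2 (t1, t2)) (int q1) = gcd (t1 * int q2) (int q1)"
    by (rule cong_gcd_eq[OF crt_cong1])
  also have "\<dots> = gcd t1 (int q1)" using copi by (simp add: coprime_commute gcd_mult_left_right_cancel)
  also have "gcd (crt q1 q2 (t1, t2)) (int q2) = gcd (t2 * int q1) (int q2)"
    by (rule cong_gcd_eq[OF crt_cong2])
  also have "\<dots> = gcd t2 (int q2)" using gcd_mult_left_right_cancel[of "int q2" "int q1" t2] copi by (simp add: coprime_commute)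
  finally show ?thesis by simp
qed

lemma crt_sum:
  assumes q1: "q1 > 0" and q2: "q2 > 0" and cop: "coprime q1 q2"
  shows "(\<Sum>t\<in>{0..<int (q1 * q2)}. h t) = (\<Sum>t1\<in>{0..<int q1}. \<Sum>t2\<in>{0..<int q2}. h (crt q1 q2 (t1, t2)))"
  using sum.reindex_bij_betw[OF crt_bij[OF assms], of h] by (simp add: sum.cartesian_product)

lemma cs_mult:
  assumes q1: "q1 > 0" and q2: "q2 > 0" and cop: "coprime q1 q2"
  shows "cs (q1 * q2) m = cs q1 m * cs q2 m"
proof -
  have cp: "coprime (crt q1 q2 (t1, t2)) (int (q1 * q2)) \<longleftrightarrow> coprime t1 (int q1) \<and> coprime t2 (int q2)" for t1 t2
  proof -
    have "coprime (crt q1 q2 (t1, t2)) (int (q1 * q2)) \<longleftrightarrow> gcd t1 (int q1) * gcd t2 (int q2) = 1"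
      using crt_gcd[OF assms] by (simp add: coprime_iff_gcd_eq_1)
    also have "\<dots> \<longleftrightarrow> gcd t1 (int q1) = 1 \<and> gcd t2 (int q2) = 1"
    proof -
      have ab: "a * b = 1 \<longleftrightarrow> a = 1 \<and> b = 1" if "0 \<le> a" "0 \<le> b" for a b :: int
        using that by (cases "a = 0") (auto simp: pos_zmult_eq_1_iff)
      show ?thesis by (rule ab) simp_all
    qed
    finally show ?thesis by (simp add: coprime_iff_gcd_eq_1)
  qed
  have "cs (q1 * q2) m = (\<Sum>t\<in>{0..<int (q1 * q2)}. if coprime t (int (q1 * q2)) then ee (q1 * q2) (t * m) else 0)"
    unfolding cs_def UU_def by (rule sum.inter_filter) simp
  also have "\<dots> = (\<Sum>t1\<in>{0..<int q1}. \<Sum>t2\<in>{0..<int q2}. (if coprime t1 (int q1) then ee q1 (t1 * m) else 0) * (if coprime t2 (int q2) then ee q2 (t2 * m) else 0))"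
    by (subst crt_sum[OF assms]) (intro sum.cong refl, simp only: cp crt_ee[OF q1 q2], simp)
  also have "\<dots> = cs q1 m * cs q2 m"
  proof -
    have cs_if: "cs q m = (\<Sum>t\<in>{0..<int q}. if coprime t (int q) then ee q (t*m) else 0)" for q
      unfolding cs_def UU_def by (rule sum.inter_filter) simp
    show ?thesis by (simp only: cs_if sum_product)
  qed
  finally show ?thesis .
qed

lemma Hq_mult:
  assumes q1: "q1 > 0" and q2: "q2 > 0" and cop: "coprime q1 q2"
  shows "Hq (q1 * q2) = Hq q1 * Hq q2"
proof -
  have "Hq (q1 * q2) = (\<Sum>t1\<in>{0..<int q1}. \<Sum>t2\<in>{0..<int q2}. (ee q1 (t1 * -1) * (of_int (gcd t1 (int q1)))^2) * (ee q2 (t2 * -1) * (of_int (gcd t2 (int q2)))^2))"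
    unfolding Hq_def
  proof (subst crt_sum[OF assms], intro sum.cong refl)
    fix t1 t2
    have "ee (q1 * q2) (- crt q1 q2 (t1, t2)) = ee q1 (t1 * -1) * ee q2 (t2 * -1)"
      using crt_ee[OF q1 q2, of t1 t2 "-1"] by simp
    then show "ee (q1 * q2) (- crt q1 q2 (t1, t2)) * (of_int (gcd (crt q1 q2 (t1, t2)) (int (q1 * q2))))\<^sup>2 =
         ee q1 (t1 * - 1) * (of_int (gcd t1 (int q1)))\<^sup>2 * (ee q2 (t2 * - 1) * (of_int (gcd t2 (int q2)))\<^sup>2)"
      using crt_gcd[OF assms, of t1 t2] by (simp add: power_mult_distrib)
  qed
  also have "\<dots> = Hq q1 * Hq q2"
    unfolding Hq_def sum_product by simp
  finally show ?thesis .
qed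


lemma ram_cs:
  assumes q: "q > 0"
  shows "ramanujan_sum q m = cs q m"
  unfolding ramanujan_sum_def cs_def
proof (rule sum.reindex_bij_witness[where i="\<lambda>u. if u = 0 then q else nat u" and j="\<lambda>a. int a mod int q"])
  fix a assume a: "a \<in> {a. a \<in> {1..q} \<and> coprime a q}"
  show "(if int a mod int q = 0 then q else nat (int a mod int q)) = a"
  proof (cases "a = q")
    case True then show ?thesis by simp
  next
    case False then have "a < q" using a by auto
    then show ?thesis using a by auto
  qed
  have "coprime (int a mod int q) (int q)" using a by simp
  then show "int a mod int q \<in> UU q" unfolding UU_def using q by simp
  have "[int a * m = (int a mod int q) * m] (mod int q)"
    by (intro cong_mult cong_refl) (simp add: cong_def)
  then have "ee q ((int a mod int q) * m) = ee q (int a * m)" using q by (intro ee_cong) (auto simp: cong_sym)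
  then show "ee q ((int a mod int q) * m) = exp (2 * complex_of_real pi * \<i> * of_nat a * of_int m / of_nat q)"
    unfolding ee_def by (simp add: mult.assoc)
next
  fix u assume u: "u \<in> UU q"
  then have u1: "0 \<le> u" "u < int q" "coprime u (int q)" unfolding UU_def by auto
  show "int (if u = 0 then q else nat u) mod int q = u" using u1 by auto
  show "(if u = 0 then q else nat u) \<in> {a. a \<in> {1..q} \<and> coprime a q}"
  proof (cases "u = 0")
    case True
    then have "q = 1" using u1 by simp
    then show ?thesis using True by simp
  next
    case False
    then have "coprime (nat u) q" using u1 by (metis coprime_int_iff int_nat_eq)
    then show ?thesis using False u1 by auto
  qed
qed

definition FF :: "nat \<Rightarrow> nat \<Rightarrow> complex" where
  "FF n q = cs q (-1) * cs q (- int n) / Hq q"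

lemma Cbar_FF:
  assumes q: "q > 0"
  shows "Cbar q (int n) = FF n q"
proof -
  have "Cbar q (int n) = (1 / (of_nat q * Hq q)) * (\<Sum>w\<in>SL2 q. cs q (d_entry w - int n))"
    unfolding Cbar_def using card_SL2[OF q] ram_cs[OF q] by simp
  also have "\<dots> = (1 / (of_nat q * Hq q)) * (of_nat q * cs q (-1) * cs q (- int n))"
    by (simp only: sum_cs[OF q])
  also have "\<dots> = FF n q" unfolding FF_def using q by (simp add: field_simps)
  finally show ?thesis .
qed

lemma FF_mult:
  assumes "q1 > 0" "q2 > 0" "coprime q1 q2"
  shows "FF n (q1 * q2) = FF n q1 * FF n q2"
  unfolding FF_def using cs_mult[OF assms] Hq_mult[OF assms] by simp

lemma UU_1: "UU 1 = {0}" unfolding UU_def by auto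

lemma FF_1: "FF n 1 = 1"
proof -
  have "{0..<1::int} = {0}" by auto
  then show ?thesis unfolding FF_def cs_def Hq_def UU_1 by simp
qed

lemma coprime_prime_int: "prime (p::int) \<Longrightarrow> coprime t p \<longleftrightarrow> \<not> p dvd t"
  by (metis coprime_commute coprime_common_divisor dvd_refl not_prime_unit prime_imp_coprime)

lemma cs_pp:
  assumes p: "prime p" and k: "k > 0"
  shows "cs (p ^ k) m = (if int (p ^ k) dvd m then of_nat (p ^ k) else 0)
                        - (if int (p ^ (k - 1)) dvd m then of_nat (p ^ (k - 1)) else 0)"
proof -
  define r where "r = p ^ (k - 1)"
  have pk: "p ^ k = p * r" unfolding r_def using k by (cases k) auto
  have p0: "p > 0" using p prime_gt_0_nat by blast
  have r0: "r > 0" unfolding r_def using p0 by simp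
  have q0: "p ^ k > 0" using p0 by simp
  have pint: "prime (int p)" using p by simp
  have UUeq: "UU (p ^ k) = {0..<int (p ^ k)} - {t\<in>{0..<int (p ^ k)}. int p dvd t}"
    unfolding UU_def using k by (auto simp: coprime_power_right_iff coprime_prime_int[OF pint])
  have mult_set: "{t\<in>{0..<int (p ^ k)}. int p dvd t} = (\<lambda>j. j * int p) ` {0..<int r}"
  proof (rule equalityI; rule subsetI)
    fix t assume "t \<in> {t\<in>{0..<int (p ^ k)}. int p dvd t}"
    then have t: "0 \<le> t" "t < int p * int r" "int p dvd t" using pk by auto
    then obtain j where j: "t = j * int p" by (metis dvd_def mult.commute)
    have "0 \<le> j" using t(1) j p0 by (simp add: zero_le_mult_iff)
    moreover have "j < int r" using t(2) j p0 by (simp add: mult.commute)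
    ultimately show "t \<in> (\<lambda>j. j * int p) ` {0..<int r}" using j by auto
  next
    fix t assume "t \<in> (\<lambda>j. j * int p) ` {0..<int r}"
    then obtain j where j0: "j \<in> {0..<int r}" and j1: "t = j * int p" by (rule imageE)
    then show "t \<in> {t\<in>{0..<int (p ^ k)}. int p dvd t}" using pk p0 by (auto simp: mult.commute)
  qed
  have "cs (p ^ k) m = (\<Sum>t\<in>{0..<int (p ^ k)}. ee (p ^ k) (t * m)) - (\<Sum>t\<in>{t\<in>{0..<int (p ^ k)}. int p dvd t}. ee (p ^ k) (t * m))"
    unfolding cs_def UUeq by (rule sum_diff) auto
  also have "(\<Sum>t\<in>{t\<in>{0..<int (p ^ k)}. int p dvd t}. ee (p ^ k) (t * m)) = (\<Sum>j\<in>{0..<int r}. ee (p ^ k) (j * int p * m))"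
    unfolding mult_set using p0 by (subst sum.reindex) (auto simp: inj_on_def)
  also have "\<dots> = (\<Sum>j\<in>{0..<int r}. ee r (j * m))"
  proof (intro sum.cong refl)
    fix j
    have "ee (p * r) ((j * m) * int p) = ee r (j * m)" by (rule ee_scale[OF p0])
    then show "ee (p ^ k) (j * int p * m) = ee r (j * m)" using pk by (simp add: mult_ac)
  qed
  finally show ?thesis using ee_orth[OF q0] ee_orth[OF r0] unfolding r_def by simp
qed

lemma cs_p:
  assumes p: "prime p"
  shows "cs p m = (if int p dvd m then of_nat p else 0) - 1"
  using cs_pp[OF p, of 1] by simp

lemma cs_pp_minus1:
  assumes p: "prime p" and k: "k \<ge> 2"
  shows "cs (p ^ k) (-1) = 0"
proof -
  have "p ^ (k - 1) > 1" using p k prime_gt_1_nat[OF p] by (intro one_less_power) auto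
  moreover have "p ^ k > 1" using p k prime_gt_1_nat[OF p] by (intro one_less_power) auto
  ultimately have "\<not> int (p ^ (k - 1)) dvd -1" "\<not> int (p ^ k) dvd -1" using k by (auto simp del: of_nat_power)
  then show ?thesis using cs_pp[OF p, of k] k by simp
qed

lemma Hq_p:
  assumes p: "prime p"
  shows "Hq p = of_nat p ^ 2 - 1"
proof -
  have p0: "p > 0" using p prime_gt_0_nat by blast
  have g1: "gcd t (int p) = 1" if "t \<in> {1..<int p}" for t
  proof -
    have "\<not> int p dvd t" using that by (auto dest: zdvd_imp_le)
    then show ?thesis using coprime_prime_int[of "int p" t] p by (simp add: coprime_iff_gcd_eq_1)
  qed
  have split: "{0..<int p} = insert 0 {1..<int p}" using p0 by auto
  have "Hq p = of_nat p ^ 2 + (\<Sum>t\<in>{1..<int p}. ee p (-t))"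
    unfolding Hq_def split using g1 by (simp add: sum.insert)
  moreover have "(\<Sum>t\<in>{0..<int p}. ee p (t * -1)) = 0"
    using ee_orth[OF p0, of "-1"] p prime_gt_1_nat[OF p] by simp
  then have "1 + (\<Sum>t\<in>{1..<int p}. ee p (-t)) = 0" unfolding split by (simp add: sum.insert)
  ultimately show ?thesis by (simp add: algebra_simps eq_neg_iff_add_eq_0)
qed

lemma FF_p:
  assumes p: "prime p"
  shows "FF n p = (if p dvd n then - 1 / (of_nat p + 1) else 1 / (of_nat p ^ 2 - 1))"
proof -
  have p1: "p > 1" using p prime_gt_1_nat by blast
  have "\<not> int p dvd -1" using p1 by auto
  then have c1: "cs p (-1) = -1" using cs_p[OF p] by simp
  have c2: "cs p (- int n) = (if p dvd n then of_nat p else 0) - 1" using cs_p[OF p] by simp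
  have ne: "(of_nat p :: complex) ^ 2 - 1 \<noteq> 0"
  proof
    assume "(of_nat p :: complex) ^ 2 - 1 = 0"
    then have "(of_nat (p ^ 2) :: complex) = of_nat 1" by simp
    then have "p ^ 2 = 1" by (simp only: of_nat_eq_iff)
    then show False using p1 by (simp add: power2_eq_square)
  qed
  have ne2: "(of_nat p :: complex) + 1 \<noteq> 0"
    by (metis of_nat_Suc of_nat_eq_0_iff add.commute nat.distinct(1))
  have fac: "(of_nat p :: complex) ^ 2 - 1 = (of_nat p - 1) * (of_nat p + 1)" by (simp add: power2_eq_square algebra_simps)
  show ?thesis unfolding FF_def c1 c2 Hq_p[OF p]
    using ne ne2 by (auto simp: fac field_simps)
qed

lemma FF_pp:
  assumes p: "prime p" and k: "k \<ge> 2"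
  shows "FF n (p ^ k) = 0"
  unfolding FF_def using cs_pp_minus1[OF assms] by simp


definition DD :: "nat \<Rightarrow> nat set \<Rightarrow> nat set" where
  "DD K P = {m. m > 0 \<and> (\<forall>p. prime p \<and> p dvd m \<longrightarrow> p \<in> P) \<and> (\<forall>p\<in>P. multiplicity p m < K)}"

lemma DD_empty: "DD K {} = {1}"
proof (rule equalityI; rule subsetI)
  fix m :: nat assume "m \<in> DD K {}"
  then have m: "m > 0" "\<And>p. prime p \<Longrightarrow> \<not> p dvd m" unfolding DD_def by auto
  show "m \<in> {1}" using prime_factor_nat[of m] m by auto
next
  fix m :: nat assume "m \<in> {1}" then show "m \<in> DD K {}" unfolding DD_def by auto
qed

lemma DD_insert:
  assumes p0: "prime p0" and notin: "p0 \<notin> P" and Pp: "\<forall>p\<in>P. prime p"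
  shows "DD K (insert p0 P) = (\<lambda>(k, m). p0 ^ k * m) ` ({..<K} \<times> DD K P)"
    and "inj_on (\<lambda>(k, m). p0 ^ k * m) ({..<K} \<times> DD K P)"
    and "\<And>m. m \<in> DD K P \<Longrightarrow> \<not> p0 dvd m"
proof -
  have ndvd: "\<not> p0 dvd m" if "m \<in> DD K P" for m
    using that notin p0 unfolding DD_def by auto
  then show "\<And>m. m \<in> DD K P \<Longrightarrow> \<not> p0 dvd m" .
  have p00: "p0 \<noteq> 0" using p0 by auto
  show "DD K (insert p0 P) = (\<lambda>(k, m). p0 ^ k * m) ` ({..<K} \<times> DD K P)"
  proof (rule equalityI; rule subsetI)
    fix n assume n: "n \<in> DD K (insert p0 P)"
    then have n0: "n > 0" and nP: "\<And>q. prime q \<Longrightarrow> q dvd n \<Longrightarrow> q \<in> insert p0 P"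
      and nK: "\<And>p. p \<in> insert p0 P \<Longrightarrow> multiplicity p n < K" unfolding DD_def by auto
    define k where "k = multiplicity p0 n"
    define m where "m = n div p0 ^ k"
    have nm: "n = p0 ^ k * m" unfolding m_def k_def by (simp add: multiplicity_dvd)
    have nd: "\<not> p0 dvd m" unfolding m_def k_def using n0 p0 by (intro multiplicity_decompose) auto
    have m0: "m > 0" using nm n0 by (metis gr0I mult_0_right)
    have mdvd: "m dvd n" using nm by simp
    have "m \<in> DD K P" unfolding DD_def
    proof (intro CollectI conjI allI impI ballI m0)
      fix q assume "prime q \<and> q dvd m"
      then have "q \<in> insert p0 P" "q \<noteq> p0" using nP[of q] mdvd nd by (auto intro: dvd_trans)
      then show "q \<in> P" by simp
    next
      fix p assume "p \<in> P"
      have "multiplicity p m \<le> multiplicity p n" using mdvd n0 by (intro dvd_imp_multiplicity_le) auto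
      then show "multiplicity p m < K" using nK[of p] \<open>p \<in> P\<close> by simp
    qed
    moreover have "k < K" unfolding k_def using nK by simp
    ultimately show "n \<in> (\<lambda>(k, m). p0 ^ k * m) ` ({..<K} \<times> DD K P)" using nm by force
  next
    fix n assume "n \<in> (\<lambda>(k, m). p0 ^ k * m) ` ({..<K} \<times> DD K P)"
    then obtain k m where km: "k < K" "m \<in> DD K P" "n = p0 ^ k * m" by auto
    then have m0: "m > 0" and mP: "\<And>q. prime q \<Longrightarrow> q dvd m \<Longrightarrow> q \<in> P"
      and mK: "\<And>p. p \<in> P \<Longrightarrow> multiplicity p m < K" unfolding DD_def by auto
    have nd: "\<not> p0 dvd m" using ndvd km by simp
    show "n \<in> DD K (insert p0 P)" unfolding DD_def
    proof (intro CollectI conjI allI impI ballI)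
      show "n > 0" using km m0 p0 by (simp add: prime_gt_0_nat)
    next
      fix q assume q: "prime q \<and> q dvd n"
      then have "prime q" "q dvd p0 ^ k * m" using km by auto
      then have "q dvd p0 ^ k \<or> q dvd m" using prime_dvd_mult_iff by blast
      then show "q \<in> insert p0 P"
      proof
        assume "q dvd p0 ^ k"
        then have "q dvd p0" using q prime_dvd_power by blast
        then have "q = p0" using q p0 by (simp add: primes_dvd_imp_eq)
        then show ?thesis by simp
      qed (use mP q in auto)
    next
      fix p assume p: "p \<in> insert p0 P"
      have pp: "prime p" using p p0 Pp by auto
      have "multiplicity p n = multiplicity p (p0 ^ k) + multiplicity p m"
        using km pp m0 p00 by (simp add: prime_elem_multiplicity_mult_distrib)
      moreover have "multiplicity p (p0 ^ k) + multiplicity p m < K"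
      proof (cases "p = p0")
        case True
        then show ?thesis using nd km p0 by (simp add: not_dvd_imp_multiplicity_0)
      next
        case False
        then have "p \<in> P" using p by simp
        then show ?thesis using mK[of p] multiplicity_distinct_prime_power[OF pp p0 False] by simp
      qed
      ultimately show "multiplicity p n < K" by simp
    qed
  qed
  show "inj_on (\<lambda>(k, m). p0 ^ k * m) ({..<K} \<times> DD K P)"
  proof (rule inj_onI)
    fix x y assume x: "x \<in> {..<K} \<times> DD K P" and y: "y \<in> {..<K} \<times> DD K P"
      and eqxy: "(\<lambda>(k, m). p0 ^ k * m) x = (\<lambda>(k, m). p0 ^ k * m) y"
    obtain k m where xx: "x = (k, m)" by fastforce
    obtain k' m' where yy: "y = (k', m')" by fastforce
    have a: "m \<in> DD K P" "m' \<in> DD K P" using x y xx yy by auto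
    have eq: "p0 ^ k * m = p0 ^ k' * m'" using eqxy xx yy by simp
    have "multiplicity p0 (p0 ^ k * m) = k" using ndvd[OF a(1)] p00 by (intro multiplicity_decomposeI) auto
    moreover have "multiplicity p0 (p0 ^ k' * m') = k'" using ndvd[OF a(2)] p00 by (intro multiplicity_decomposeI) auto
    ultimately have "k = k'" using eq by simp
    then show "x = y" using eq p00 xx yy by simp
  qed
qed

lemma euler_finite:
  fixes f :: "nat \<Rightarrow> 'a::comm_ring_1"
  assumes f1: "f 1 = 1"
    and fmult: "\<And>a b. a > 0 \<Longrightarrow> b > 0 \<Longrightarrow> coprime a b \<Longrightarrow> f (a * b) = f a * f b"
    and fin: "finite P" and Pp: "\<forall>p\<in>P. prime p"
  shows "finite (DD K P) \<and> (\<Prod>p\<in>P. \<Sum>k<K. f (p ^ k)) = (\<Sum>m\<in>DD K P. f m)"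
  using fin Pp
proof (induction P rule: finite_induct)
  case empty
  then show ?case using f1 by (simp add: DD_empty)
next
  case (insert p0 P)
  have p0: "prime p0" using insert by simp
  have Pp: "\<forall>p\<in>P. prime p" using insert by simp
  note DI = DD_insert[OF p0 insert(2) Pp, where K=K]
  have IH: "finite (DD K P)" "(\<Prod>p\<in>P. \<Sum>k<K. f (p ^ k)) = (\<Sum>m\<in>DD K P. f m)" using insert Pp by auto
  have "finite (DD K (insert p0 P))" unfolding DI(1) using IH by simp
  moreover have "(\<Prod>p\<in>insert p0 P. \<Sum>k<K. f (p ^ k)) = (\<Sum>m\<in>DD K (insert p0 P). f m)"
  proof -
    have "(\<Prod>p\<in>insert p0 P. \<Sum>k<K. f (p ^ k)) = (\<Sum>k<K. f (p0 ^ k)) * (\<Sum>m\<in>DD K P. f m)"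
      using insert IH by simp
    also have "\<dots> = (\<Sum>(k, m)\<in>{..<K} \<times> DD K P. f (p0 ^ k) * f m)"
      by (simp add: sum_product sum.cartesian_product)
    also have "\<dots> = (\<Sum>(k, m)\<in>{..<K} \<times> DD K P. f (p0 ^ k * m))"
    proof (intro sum.cong refl)
      fix x assume x: "x \<in> {..<K} \<times> DD K P"
      obtain k m where xx: "x = (k, m)" by fastforce
      have "m \<in> DD K P" using x xx by auto
      then have "m > 0" "\<not> p0 dvd m" using DI(3)[of m] by (auto simp: DD_def)
      moreover have "coprime (p0 ^ k) m" using \<open>\<not> p0 dvd m\<close> p0
        by (simp add: coprime_power_left_iff prime_imp_coprime)
      ultimately have "f (p0 ^ k) * f m = f (p0 ^ k * m)" using fmult[of "p0 ^ k" m] p0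
        by (simp add: prime_gt_0_nat)
      then show "(case x of (k, m) \<Rightarrow> f (p0 ^ k) * f m) = (case x of (k, m) \<Rightarrow> f (p0 ^ k * m))"
        using xx by simp
    qed
    also have "\<dots> = (\<Sum>m\<in>DD K (insert p0 P). f m)"
      unfolding DI(1) using DI(2) by (simp add: sum.reindex case_prod_unfold)
    finally show ?thesis .
  qed
  ultimately show ?case by simp
qed

lemma small_in_DD:
  assumes m: "1 \<le> m" "m \<le> N"
  shows "m \<in> DD (Suc N) {p. prime p \<and> p \<le> N}"
proof -
  have A: "\<forall>p. prime p \<and> p dvd m \<longrightarrow> p \<in> {p. prime p \<and> p \<le> N}"
  proof (intro allI impI)
    fix p assume h: "prime p \<and> p dvd m"
    then have "p \<le> m" using m by (intro dvd_imp_le) auto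
    then show "p \<in> {p. prime p \<and> p \<le> N}" using m h by simp
  qed
  have B: "\<forall>p\<in>{p. prime p \<and> p \<le> N}. multiplicity p m < Suc N"
  proof
    fix p assume "p \<in> {p. prime p \<and> p \<le> N}"
    then have p: "prime p" by simp
    define k where "k = multiplicity p m"
    have "p ^ k dvd m" unfolding k_def by (rule multiplicity_dvd)
    then have "p ^ k \<le> m" using m by (intro dvd_imp_le) auto
    moreover have "2 ^ k \<le> p ^ k" using p prime_ge_2_nat by (intro power_mono) auto
    moreover have "k < 2 ^ k" by (rule less_exp)
    ultimately show "multiplicity p m < Suc N" using m unfolding k_def by linarith
  qed
  show ?thesis unfolding DD_def using A B m by simp
qed


definition PP :: "nat \<Rightarrow> nat set" where "PP N = {p. prime p \<and> p \<le> N}"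

lemma PP_finite: "finite (PP N)" unfolding PP_def by auto
lemma PP_prime: "\<forall>p\<in>PP N. prime p" unfolding PP_def by auto

lemma sum_le_suminf_shift:
  fixes g :: "nat \<Rightarrow> real"
  assumes sg: "summable (\<lambda>j. g (Suc (j + N)))" and g0: "\<And>m. g m \<ge> 0"
    and E: "finite E" "\<And>m. m \<in> E \<Longrightarrow> m > N"
  shows "(\<Sum>m\<in>E. g m) \<le> (\<Sum>j. g (Suc (j + N)))"
proof -
  define E' where "E' = (\<lambda>m. m - Suc N) ` E"
  have inj: "inj_on (\<lambda>j. Suc (j + N)) E'" by (auto simp: inj_on_def)
  have img: "(\<lambda>j. Suc (j + N)) ` E' = E"
  proof (rule equalityI; rule subsetI)
    fix m assume "m \<in> (\<lambda>j. Suc (j + N)) ` E'"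
    then obtain m0 where "m0 \<in> E" "m = Suc (m0 - Suc N + N)" unfolding E'_def by auto
    then show "m \<in> E" using E(2)[of m0] by auto
  next
    fix m assume m: "m \<in> E"
    then have "m = Suc ((m - Suc N) + N)" using E(2)[of m] by auto
    then show "m \<in> (\<lambda>j. Suc (j + N)) ` E'" unfolding E'_def using m by blast
  qed
  have "(\<Sum>m\<in>E. g m) = (\<Sum>j\<in>E'. g (Suc (j + N)))"
    using sum.reindex[OF inj, of g] img by simp
  also have "\<dots> \<le> (\<Sum>j. g (Suc (j + N)))"
    by (rule sum_le_suminf[OF sg]) (use E g0 in \<open>auto simp: E'_def\<close>)
  finally show ?thesis .
qed

lemma sum_le_suminf_pos:
  fixes g :: "nat \<Rightarrow> real"
  assumes sg: "summable (\<lambda>j. g (Suc j))" and g0: "\<And>m. g m \<ge> 0"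
    and E: "finite E" "\<And>m. m \<in> E \<Longrightarrow> m > 0"
  shows "(\<Sum>m\<in>E. g m) \<le> (\<Sum>j. g (Suc j))"
  using sum_le_suminf_shift[of g 0 E] assms by simp

definition zz :: "nat \<Rightarrow> real" where "zz p = (real p)^2 / ((real p)^2 - 1)"
definition PZ :: "nat \<Rightarrow> real" where "PZ N = (\<Prod>p\<in>PP N. zz p)"

lemma zz_geom:
  assumes p: "prime p"
  shows "(\<lambda>K. \<Sum>k<K. (1 / (real p)^2) ^ k) \<longlonglongrightarrow> zz p"
    and "(\<Sum>k<K. (1 / (real p)^2) ^ k) \<le> zz p"
    and "zz p \<ge> 1"
proof -
  have p2: "real p \<ge> 2" using prime_ge_2_nat[OF p] by simp
  have "1 < real p" using p2 by simp
  then have "1 < real p ^ 2" by (simp add: one_less_power)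
  then have x: "norm (1 / (real p)^2) < 1" by (auto simp: divide_less_eq_1)
  have zz: "zz p = 1 / (1 - 1 / (real p)^2)" unfolding zz_def using p2 by (simp add: field_simps)
  have s: "(\<lambda>k. (1 / (real p)^2) ^ k) sums zz p" unfolding zz using geometric_sums[OF x] .
  then show "(\<lambda>K. \<Sum>k<K. (1 / (real p)^2) ^ k) \<longlonglongrightarrow> zz p" by (simp add: sums_def)
  show "(\<Sum>k<K. (1 / (real p)^2) ^ k) \<le> zz p"
    using sum_le_suminf[OF sums_summable[OF s], of "{..<K}"] sums_unique[OF s] by simp
  show "zz p \<ge> 1" unfolding zz_def using p2 by (simp add: field_simps)
qed

lemma inv_sq_mult: "a > 0 \<Longrightarrow> b > 0 \<Longrightarrow> coprime a b \<Longrightarrow> 1 / (real (a * b))^2 = 1 / (real a)^2 * (1 / (real b)^2)"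
  by (simp add: power_mult_distrib)

lemma inv_sq_sums: "(\<lambda>j. 1 / (real (Suc j))^2) sums (pi^2 / 6)"
proof -
  have "(\<lambda>j. 1 / (real (Suc j))^2) = (\<lambda>n. 1 / (real n + 1)^2)" by (simp add: add.commute)
  then show ?thesis using inverse_squares_sums by simp
qed

lemma inv_sq_summable: "summable (\<lambda>j. 1 / (real (Suc j))^2)"
  using inv_sq_sums sums_summable by blast

lemma inv_sq_suminf: "(\<Sum>j. 1 / (real (Suc j))^2) = pi^2 / 6"
  using inv_sq_sums sums_unique by metis

lemma DD_sum_inv_sq:
  "(\<Prod>p\<in>PP N. \<Sum>k<K. (1 / (real p)^2) ^ k) = (\<Sum>m\<in>DD K (PP N). 1 / (real m)^2)"
  "finite (DD K (PP N))"
proof -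
  have e: "finite (DD K (PP N)) \<and> (\<Prod>p\<in>PP N. \<Sum>k<K. (\<lambda>m. 1 / (real m)^2) (p ^ k)) = (\<Sum>m\<in>DD K (PP N). 1 / (real m)^2)"
    by (rule euler_finite) (use inv_sq_mult PP_finite PP_prime in auto)
  then show "finite (DD K (PP N))" by simp
  show "(\<Prod>p\<in>PP N. \<Sum>k<K. (1 / (real p)^2) ^ k) = (\<Sum>m\<in>DD K (PP N). 1 / (real m)^2)"
    using e by (simp add: power_divide power_mult[symmetric] mult.commute flip: power_mult)
qed

lemma small_in_DD_PP: "1 \<le> m \<Longrightarrow> m \<le> N \<Longrightarrow> m \<in> DD (Suc N) (PP N)"
  unfolding PP_def by (rule small_in_DD)

lemma DD_pos: "m \<in> DD K P \<Longrightarrow> m > 0" unfolding DD_def by simp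

lemma PZ_le: "PZ N \<le> pi^2 / 6"
proof -
  have lim: "(\<lambda>K. \<Prod>p\<in>PP N. \<Sum>k<K. (1 / (real p)^2) ^ k) \<longlonglongrightarrow> PZ N"
    unfolding PZ_def by (rule tendsto_prod) (use zz_geom(1) PP_prime in auto)
  have "(\<Prod>p\<in>PP N. \<Sum>k<K. (1 / (real p)^2) ^ k) \<le> pi^2 / 6" for K
  proof -
    have "(\<Prod>p\<in>PP N. \<Sum>k<K. (1 / (real p)^2) ^ k) = (\<Sum>m\<in>DD K (PP N). 1 / (real m)^2)"
      by (rule DD_sum_inv_sq(1))
    also have "\<dots> \<le> (\<Sum>j. 1 / (real (Suc j))^2)"
      by (rule sum_le_suminf_pos[OF inv_sq_summable]) (auto simp: DD_sum_inv_sq(2) DD_pos)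
    finally show ?thesis using inv_sq_suminf by simp
  qed
  then show ?thesis by (intro LIMSEQ_le_const2[OF lim]) auto
qed

lemma PZ_lower: "(\<Sum>j<N. 1 / (real (Suc j))^2) \<le> PZ N"
proof -
  have "(\<Sum>j<N. 1 / (real (Suc j))^2) = (\<Sum>m\<in>{1..N}. 1 / (real m)^2)"
    by (subst image_Suc_lessThan[symmetric], subst sum.reindex) auto
  also have "\<dots> \<le> (\<Sum>m\<in>DD (Suc N) (PP N). 1 / (real m)^2)"
    by (rule sum_mono2) (auto simp: DD_sum_inv_sq(2) small_in_DD_PP)
  also have "\<dots> = (\<Prod>p\<in>PP N. \<Sum>k<Suc N. (1 / (real p)^2) ^ k)"
    by (rule DD_sum_inv_sq(1)[symmetric])
  also have "\<dots> \<le> PZ N"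
    unfolding PZ_def
  proof (rule prod_mono)
    fix p assume "p \<in> PP N"
    then have p: "prime p" using PP_prime by blast
    show "0 \<le> (\<Sum>k<Suc N. (1 / (real p)^2) ^ k) \<and> (\<Sum>k<Suc N. (1 / (real p)^2) ^ k) \<le> zz p"
    proof (rule conjI)
      show "0 \<le> (\<Sum>k<Suc N. (1 / (real p)^2) ^ k)" by (rule sum_nonneg) simp
      show "(\<Sum>k<Suc N. (1 / (real p)^2) ^ k) \<le> zz p" by (rule zz_geom(2)[OF p])
    qed
  qed
  finally show ?thesis .
qed

lemma PZ_lim: "PZ \<longlonglongrightarrow> pi^2 / 6"
proof (rule tendsto_sandwich[of "\<lambda>N. \<Sum>j<N. 1 / (real (Suc j))^2" _ _ "\<lambda>_. pi^2/6"])
  show "\<forall>\<^sub>F N in sequentially. (\<Sum>j<N. 1 / (real (Suc j))^2) \<le> PZ N" using PZ_lower by simp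
  show "\<forall>\<^sub>F N in sequentially. PZ N \<le> pi^2/6" using PZ_le by simp
  show "(\<lambda>N. \<Sum>j<N. 1 / (real (Suc j))^2) \<longlonglongrightarrow> pi^2/6"
    using inv_sq_sums unfolding sums_def .
qed simp


context
  fixes n :: nat
  assumes npos: "n > 0"
begin

definition gr :: "nat \<Rightarrow> real" where
  "gr p = (if p dvd n then - 1 / (real p + 1) else 1 / ((real p)^2 - 1))"

lemma FF_gr: "prime p \<Longrightarrow> FF n p = of_real (gr p)"
  unfolding gr_def by (simp add: FF_p)

lemma FF_mult': "a > 0 \<Longrightarrow> b > 0 \<Longrightarrow> coprime a b \<Longrightarrow> FF n (a * b) = FF n a * FF n b"
  by (rule FF_mult)

lemma FFn_mult: "a > 0 \<Longrightarrow> b > 0 \<Longrightarrow> coprime a b \<Longrightarrow> norm (FF n (a * b)) = norm (FF n a) * norm (FF n b)"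
  by (simp add: FF_mult norm_mult)

lemma FF_1': "FF n (Suc 0) = 1" using FF_1 by simp

lemma sum_pp:
  fixes h :: "nat \<Rightarrow> 'a::comm_ring_1"
  assumes h1: "h 1 = 1" and h0: "\<And>k. k \<ge> 2 \<Longrightarrow> h (p ^ k) = 0" and K: "K \<ge> 2"
  shows "(\<Sum>k<K. h (p ^ k)) = 1 + h p"
  using K
proof (induction K rule: dec_induct)
  case base
  then show ?case using h1 by (simp add: numeral_2_eq_2)
next
  case (step K)
  then show ?case using h0[of K] by simp
qed

lemma EP_DD:
  assumes N: "N \<ge> 1"
  shows "(\<Prod>p\<in>PP N. 1 + FF n p) = (\<Sum>m\<in>DD (Suc N) (PP N). FF n m)"
    and "(\<Prod>p\<in>PP N. 1 + norm (FF n p)) = (\<Sum>m\<in>DD (Suc N) (PP N). norm (FF n m))"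
    and "finite (DD (Suc N) (PP N))"
proof -
  have e1: "finite (DD (Suc N) (PP N)) \<and> (\<Prod>p\<in>PP N. \<Sum>k<Suc N. FF n (p ^ k)) = (\<Sum>m\<in>DD (Suc N) (PP N). FF n m)"
    by (rule euler_finite) (use FF_1 FF_mult PP_finite PP_prime in auto)
  have e2: "finite (DD (Suc N) (PP N)) \<and> (\<Prod>p\<in>PP N. \<Sum>k<Suc N. (\<lambda>m. norm (FF n m)) (p ^ k)) = (\<Sum>m\<in>DD (Suc N) (PP N). norm (FF n m))"
    by (rule euler_finite) (use FF_1 FFn_mult PP_finite PP_prime in auto)
  have s1: "(\<Sum>k<Suc N. FF n (p ^ k)) = 1 + FF n p" if "p \<in> PP N" for p
    using that PP_prime N by (intro sum_pp) (auto simp: FF_1 FF_1' FF_pp)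
  have s2: "(\<Sum>k<Suc N. norm (FF n (p ^ k))) = 1 + norm (FF n p)" if "p \<in> PP N" for p
    using that PP_prime N by (intro sum_pp[where h="\<lambda>m. norm (FF n m)"]) (auto simp: FF_1 FF_1' FF_pp)
  show "finite (DD (Suc N) (PP N))" using e1 by simp
  show "(\<Prod>p\<in>PP N. 1 + FF n p) = (\<Sum>m\<in>DD (Suc N) (PP N). FF n m)"
    using e1 s1 by (metis (no_types, lifting) prod.cong)
  show "(\<Prod>p\<in>PP N. 1 + norm (FF n p)) = (\<Sum>m\<in>DD (Suc N) (PP N). norm (FF n m))"
    using e2 s2 by (metis (no_types, lifting) prod.cong)
qed

lemma one_plus_norm_le:
  assumes p: "prime p"
  shows "1 + norm (FF n p) \<le> zz p * (if p dvd n then 2 else 1)"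
proof -
  have p2: "real p \<ge> 2" using prime_ge_2_nat[OF p] by simp
  have zz1: "zz p \<ge> 1" using zz_geom(3)[OF p] .
  have sq: "(real p)^2 - 1 > 0"
  proof -
    have "(real p)^2 \<ge> 2^2" using p2 by (intro power_mono) auto
    then show ?thesis by simp
  qed
  show ?thesis
  proof (cases "p dvd n")
    case True
    have "norm (FF n p) = \<bar>gr p\<bar>" using FF_gr[OF p] by simp
    also have "\<dots> = 1 / (real p + 1)" using True p2 unfolding gr_def by simp
    also have "\<dots> \<le> 1" using p2 by simp
    finally show ?thesis using True zz1 by simp
  next
    case False
    have "norm (FF n p) = \<bar>gr p\<bar>" using FF_gr[OF p] by simp
    also have "\<dots> = 1 / ((real p)^2 - 1)" using False sq unfolding gr_def by simp
    finally have "norm (FF n p) = 1 / ((real p)^2 - 1)" .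
    then have "1 + norm (FF n p) = zz p" unfolding zz_def using sq by (simp add: field_simps)
    then show ?thesis using False by simp
  qed
qed

lemma prod_c_le: "(\<Prod>p\<in>PP N. (if p dvd n then 2 else 1 :: real)) \<le> 2 ^ n"
proof -
  have "(\<Prod>p\<in>PP N. (if p dvd n then 2 else 1 :: real)) = (\<Prod>p\<in>{p\<in>PP N. p dvd n}. 2)"
    by (rule prod.inter_filter[symmetric], rule PP_finite)
  also have "\<dots> = 2 ^ card {p\<in>PP N. p dvd n}" by (rule prod_constant)
  also have "\<dots> \<le> 2 ^ n"
  proof (rule power_increasing)
    have "{p\<in>PP N. p dvd n} \<subseteq> {1..n}" using npos by (auto simp: PP_def dest: dvd_imp_le prime_gt_0_nat)
    then have "card {p\<in>PP N. p dvd n} \<le> card {1..n}" by (intro card_mono) auto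
    then show "card {p\<in>PP N. p dvd n} \<le> n" by simp
  qed simp
  finally show ?thesis .
qed

lemma FF_norm_summable: "summable (\<lambda>j. norm (FF n (Suc j)))"
proof (rule summableI_nonneg_bounded[where x="pi^2/6 * 2^n"])
  fix N
  show "(\<Sum>j<N. norm (FF n (Suc j))) \<le> pi^2/6 * 2^n"
  proof (cases "N = 0")
    case True then show ?thesis by simp
  next
    case False
    then have N: "N \<ge> 1" by simp
    have "(\<Sum>j<N. norm (FF n (Suc j))) = (\<Sum>m\<in>{1..N}. norm (FF n m))"
      by (subst image_Suc_lessThan[symmetric], subst sum.reindex) auto
    also have "\<dots> \<le> (\<Sum>m\<in>DD (Suc N) (PP N). norm (FF n m))"
      by (rule sum_mono2) (auto simp: EP_DD(3)[OF N] small_in_DD_PP)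
    also have "\<dots> = (\<Prod>p\<in>PP N. 1 + norm (FF n p))" by (rule EP_DD(2)[OF N, symmetric])
    also have "\<dots> \<le> (\<Prod>p\<in>PP N. zz p * (if p dvd n then 2 else 1))"
      by (rule prod_mono) (use one_plus_norm_le PP_prime in auto)
    also have "\<dots> = PZ N * (\<Prod>p\<in>PP N. (if p dvd n then 2 else 1 :: real))"
      unfolding PZ_def by (rule prod.distrib)
    also have "\<dots> \<le> pi^2/6 * 2^n"
    proof (rule mult_mono)
      show "PZ N \<le> pi^2/6" by (rule PZ_le)
      show "(\<Prod>p\<in>PP N. (if p dvd n then 2 else 1 :: real)) \<le> 2^n" by (rule prod_c_le)
      show "0 \<le> pi^2/6" by simp
      show "0 \<le> (\<Prod>p\<in>PP N. (if p dvd n then 2 else 1 :: real))" by (rule prod_nonneg) simp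
    qed
    finally show ?thesis .
  qed
qed simp

end

context
  fixes n :: nat
  assumes npos: "n > 0"
begin

definition Cn :: complex where "Cn = (\<Prod>p\<in>prime_factors n. (of_nat p - 1) / of_nat p)"

lemma EP_lim: "(\<lambda>N. \<Prod>p\<in>PP N. 1 + FF n p) \<longlonglongrightarrow> (\<Sum>j. FF n (Suc j))"
proof -
  define a where "a j = norm (FF n (Suc j))" for j
  have sa: "summable a" unfolding a_def by (rule FF_norm_summable[OF npos])
  have sF: "summable (\<lambda>j. FF n (Suc j))" using sa unfolding a_def by (rule summable_norm_cancel)
  define S where "S = (\<Sum>j. FF n (Suc j))"
  define T where "T N = (\<Sum>j. norm (FF n (Suc (j + N))))" for N
  have T_eq: "T N = suminf a - (\<Sum>i<N. a i)" for N
    using suminf_split_initial_segment[OF sa, of N] unfolding T_def a_def by simp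
  have T0: "T \<longlonglongrightarrow> 0"
  proof -
    have "(\<lambda>N. suminf a - (\<Sum>i<N. a i)) \<longlonglongrightarrow> suminf a - suminf a"
      by (intro tendsto_diff tendsto_const summable_LIMSEQ[OF sa])
    moreover have "T = (\<lambda>N. suminf a - (\<Sum>i<N. a i))" by (rule ext, rule T_eq)
    ultimately show ?thesis by simp
  qed
  have bound: "norm ((\<Prod>p\<in>PP N. 1 + FF n p) - S) \<le> 2 * T N" if N: "N \<ge> 1" for N
  proof -
    define D where "D = DD (Suc N) (PP N)"
    have finD: "finite D" unfolding D_def by (rule EP_DD(3)[OF npos N])
    have sub: "{1..N} \<subseteq> D" unfolding D_def using small_in_DD_PP by auto
    have sgN: "summable (\<lambda>j. norm (FF n (Suc (j + N))))"
      using summable_ignore_initial_segment[OF sa, of N] unfolding a_def by simp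
    have sFN: "summable (\<lambda>j. FF n (Suc (j + N)))" using sgN by (rule summable_norm_cancel)
    have EP: "(\<Prod>p\<in>PP N. 1 + FF n p) = (\<Sum>m\<in>D - {1..N}. FF n m) + (\<Sum>m\<in>{1..N}. FF n m)"
      unfolding EP_DD(1)[OF npos N] D_def[symmetric] by (intro sum.subset_diff sub finD)
    have Ssplit: "S = (\<Sum>j. FF n (Suc (j + N))) + (\<Sum>m\<in>{1..N}. FF n m)"
    proof -
      have "(\<Sum>i<N. FF n (Suc i)) = (\<Sum>m\<in>{1..N}. FF n m)"
        by (subst image_Suc_lessThan[symmetric], subst sum.reindex) auto
      then show ?thesis unfolding S_def using suminf_split_initial_segment[OF sF, of N] by simp
    qed
    have "norm ((\<Prod>p\<in>PP N. 1 + FF n p) - S) = norm ((\<Sum>m\<in>D - {1..N}. FF n m) - (\<Sum>j. FF n (Suc (j + N))))"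
      using EP Ssplit by simp
    also have "\<dots> \<le> norm (\<Sum>m\<in>D - {1..N}. FF n m) + norm (\<Sum>j. FF n (Suc (j + N)))"
      by (rule norm_triangle_ineq4)
    also have "\<dots> \<le> (\<Sum>m\<in>D - {1..N}. norm (FF n m)) + (\<Sum>j. norm (FF n (Suc (j + N))))"
      by (intro add_mono norm_sum summable_norm sgN)
    also have "(\<Sum>m\<in>D - {1..N}. norm (FF n m)) \<le> T N"
      unfolding T_def
    proof (rule sum_le_suminf_shift[OF sgN])
      show "finite (D - {1..N})" using finD by simp
      fix m assume "m \<in> D - {1..N}"
      then show "m > N" using DD_pos unfolding D_def by fastforce
    qed simp
    finally show ?thesis unfolding T_def by simp
  qed
  have "(\<lambda>N. (\<Prod>p\<in>PP N. 1 + FF n p) - S) \<longlonglongrightarrow> 0"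
  proof (rule Lim_null_comparison)
    show "\<forall>\<^sub>F N in sequentially. norm ((\<Prod>p\<in>PP N. 1 + FF n p) - S) \<le> 2 * T N"
      using bound by (intro eventually_sequentiallyI[of 1]) auto
    show "(\<lambda>N. 2 * T N) \<longlonglongrightarrow> 0" using tendsto_mult_right_zero[OF T0, of 2] by simp
  qed
  then show ?thesis unfolding S_def by (rule LIM_zero_cancel)
qed

lemma one_plus_FF:
  assumes p: "prime p"
  shows "1 + FF n p = of_real (zz p) * (if p dvd n then (of_nat p - 1) / of_nat p else 1)"
proof -
  have p2: "real p \<ge> 2" using prime_ge_2_nat[OF p] by simp
  have sq: "(real p)^2 - 1 > 0"
  proof -
    have "(real p)^2 \<ge> 2^2" using p2 by (intro power_mono) auto
    then show ?thesis by simp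
  qed
  have fac: "(real p)^2 - 1 = (real p - 1) * (real p + 1)" by (simp add: power2_eq_square algebra_simps)
  have r: "1 + gr n p = zz p * (if p dvd n then (real p - 1) / real p else 1)"
  proof (cases "p dvd n")
    case True
    have "1 + gr n p = real p / (real p + 1)" using True p2 unfolding gr_def[OF npos] by (simp add: field_simps)
    also have "\<dots> = zz p * ((real p - 1) / real p)"
    proof -
      have h1: "real p - 1 \<noteq> 0" "real p \<noteq> 0" "real p + 1 \<noteq> 0" using p2 by auto
      have "zz p * ((real p - 1) / real p) = (real p * real p * (real p - 1)) / ((real p - 1) * (real p + 1) * real p)"
        unfolding zz_def fac by (simp add: power2_eq_square)
      also have "\<dots> = (real p * (real p * (real p - 1))) / ((real p + 1) * (real p * (real p - 1)))"
        by (simp add: mult_ac)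
      also have "\<dots> = real p / (real p + 1)" using h1 by (intro nonzero_mult_divide_mult_cancel_right) simp
      finally show ?thesis by simp
    qed
    finally show ?thesis using True by simp
  next
    case False
    then show ?thesis unfolding gr_def[OF npos] zz_def using sq by (simp add: field_simps)
  qed
  have "1 + FF n p = of_real (1 + gr n p)" using FF_gr[OF npos p] by simp
  also have "\<dots> = of_real (zz p) * of_real (if p dvd n then (real p - 1) / real p else 1)"
    unfolding r by simp
  also have "of_real (if p dvd n then (real p - 1) / real p else 1) = (if p dvd n then (of_nat p - 1) / of_nat p else (1::complex))"
    by simp
  finally show ?thesis .
qed

lemma EP_eq:
  assumes N: "N \<ge> n"
  shows "(\<Prod>p\<in>PP N. 1 + FF n p) = of_real (PZ N) * Cn"
proof -
  have "(\<Prod>p\<in>PP N. 1 + FF n p) = (\<Prod>p\<in>PP N. of_real (zz p) * (if p dvd n then (of_nat p - 1) / of_nat p else 1))"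
    using PP_prime one_plus_FF by (intro prod.cong refl) auto
  also have "\<dots> = (\<Prod>p\<in>PP N. of_real (zz p)) * (\<Prod>p\<in>PP N. (if p dvd n then (of_nat p - 1) / of_nat p else (1::complex)))"
    by (rule prod.distrib)
  also have "(\<Prod>p\<in>PP N. of_real (zz p)) = (of_real (PZ N) :: complex)"
    unfolding PZ_def by simp
  also have "(\<Prod>p\<in>PP N. (if p dvd n then (of_nat p - 1) / of_nat p else (1::complex))) = (\<Prod>p\<in>{p\<in>PP N. p dvd n}. (of_nat p - 1) / of_nat p)"
    by (rule prod.inter_filter[symmetric], rule PP_finite)
  also have "{p\<in>PP N. p dvd n} = prime_factors n"
    using npos N by (auto simp: PP_def prime_factors_dvd dest: dvd_imp_le)
  finally show ?thesis unfolding Cn_def .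
qed

lemma S_val: "(\<Sum>j. FF n (Suc j)) = of_real (pi^2/6) * Cn"
proof -
  have l1: "(\<lambda>N. of_real (PZ N) * Cn) \<longlonglongrightarrow> of_real (pi^2/6) * Cn"
    by (intro tendsto_mult tendsto_const tendsto_of_real PZ_lim)
  have "\<forall>\<^sub>F N in sequentially. of_real (PZ N) * Cn = (\<Prod>p\<in>PP N. 1 + FF n p)"
    using EP_eq by (intro eventually_sequentiallyI[of n]) auto
  then have "(\<lambda>N. \<Prod>p\<in>PP N. 1 + FF n p) \<longlonglongrightarrow> of_real (pi^2/6) * Cn"
    by (rule Lim_transform_eventually[OF l1])
  then show ?thesis using EP_lim by (rule LIMSEQ_unique[rotated])
qed

lemma Cn_nz: "Cn \<noteq> 0"
proof -
  have "(of_nat p - 1) / of_nat p \<noteq> (0::complex)" if "p \<in> prime_factors n" for p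
  proof -
    have "prime p" using that by (simp add: in_prime_factors_imp_prime)
    then have "p \<ge> 2" by (rule prime_ge_2_nat)
    then have "(of_nat p :: complex) \<noteq> 1" "(of_nat p :: complex) \<noteq> 0"
      by (metis of_nat_1 of_nat_eq_iff numeral_le_one_iff semiring_norm(69), simp)
    then show ?thesis by simp
  qed
  then show ?thesis unfolding Cn_def by (simp add: prod_zero_iff)
qed

end


theorem mainTheorem3:
  fixes n :: nat
  assumes "n > 0"
  shows "summable (\<lambda>q. norm (Cbar (Suc q) (int n))) \<and>
         (\<forall>p. prime p \<longrightarrow> summable (\<lambda>k. Cbar (p ^ Suc k) (int n))) \<and>
         ((\<lambda>p. if prime p then 1 + (\<Sum>k. Cbar (p ^ Suc k) (int n)) else 1)
           has_prod (\<Sum>q. Cbar (Suc q) (int n))) \<and>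
         (\<Sum>q. Cbar (Suc q) (int n))
           = of_real (pi ^ 2 / 6) * (\<Prod>p \<in> prime_factors n. (of_nat p - 1) / of_nat p)"
proof -
  have cb: "Cbar (Suc q) (int n) = FF n (Suc q)" for q by (rule Cbar_FF) simp
  have cbf: "(\<lambda>q. Cbar (Suc q) (int n)) = (\<lambda>q. FF n (Suc q))" using cb by auto
  have pk: "(\<lambda>k. Cbar (p ^ Suc k) (int n)) = (\<lambda>k. if k = 0 then FF n p else 0)" if p: "prime p" for p
  proof
    fix k
    have "p ^ Suc k > 0" using p prime_gt_0_nat by simp
    then have "Cbar (p ^ Suc k) (int n) = FF n (p ^ Suc k)" by (rule Cbar_FF)
    also have "\<dots> = (if k = 0 then FF n p else 0)"
      using FF_pp[OF p, of "Suc k" n] by auto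
    finally show "Cbar (p ^ Suc k) (int n) = (if k = 0 then FF n p else 0)" .
  qed
  have pks: "(\<lambda>k. Cbar (p ^ Suc k) (int n)) sums FF n p" if p: "prime p" for p
    unfolding pk[OF p] using sums_single[of 0 "\<lambda>_. FF n p"] by simp
  have S: "(\<Sum>q. Cbar (Suc q) (int n)) = of_real (pi^2/6) * Cn n"
    unfolding cbf using S_val[OF assms] .
  have part1: "summable (\<lambda>q. norm (Cbar (Suc q) (int n)))"
    using FF_norm_summable[OF assms] by (simp add: cb)
  have part2: "\<forall>p. prime p \<longrightarrow> summable (\<lambda>k. Cbar (p ^ Suc k) (int n))"
    using pks sums_summable by blast
  have fe: "(\<lambda>p. if prime p then 1 + (\<Sum>k. Cbar (p ^ Suc k) (int n)) else 1) = (\<lambda>p. if prime p then 1 + FF n p else 1)"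
    using pks sums_unique by (metis (no_types, lifting))
  have part3: "(\<lambda>p. if prime p then 1 + (\<Sum>k. Cbar (p ^ Suc k) (int n)) else 1) has_prod (\<Sum>q. Cbar (Suc q) (int n))"
    unfolding fe has_prod_def raw_has_prod_def
  proof (intro disjI1 conjI)
    have "(\<Prod>i\<le>N. if prime (i + 0) then 1 + FF n (i + 0) else 1) = (\<Prod>p\<in>PP N. 1 + FF n p)" for N
    proof -
      have "(\<Prod>i\<le>N. if prime (i + 0) then 1 + FF n (i + 0) else 1) = (\<Prod>i\<in>{..N}. if prime i then 1 + FF n i else 1)"
        by (simp only: add_0_right)
      also have "\<dots> = (\<Prod>i\<in>{i\<in>{..N}. prime i}. 1 + FF n i)"
        by (rule prod.inter_filter[symmetric]) simp
      also have "{i\<in>{..N}. prime i} = PP N" unfolding PP_def by auto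
      finally show ?thesis .
    qed
    then show "(\<lambda>N. \<Prod>i\<le>N. if prime (i + 0) then 1 + FF n (i + 0) else 1) \<longlonglongrightarrow> (\<Sum>q. Cbar (Suc q) (int n))"
      unfolding cbf using EP_lim[OF assms] by simp
    show "(\<Sum>q. Cbar (Suc q) (int n)) \<noteq> 0"
      unfolding S using Cn_nz[OF assms] by simp
  qed
  show ?thesis using part1 part2 part3 S unfolding Cn_def[OF assms] by blast
qed


end
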